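(* Let $\mathcal A$ be a weighted ODCA over $\mathbb F$, $K=|Q|\cdot|C|$, $c$ a configuration with counter value $n$, $V\subseteq\mathbb F^{|Q|}$ a subspace and $S\subseteq C$. If $z$ is a minimal witness for $(c,\overline V,S,\mathbb N)$, then $|z|\le K\cdot(\max(n,K)+K^2)$.
   Context: Fix a field $\mathbb{F}$ and a finite alphabet $\Sigma$. For $n\in\mathbb N$ let $\mathrm{sgn}(n)=0$ if $n=0$ and $1$ if $n>0$. A weighted ODCA is $\mathcal{A}=((C,\delta_0,\delta_1,p_0),(Q,\lambda,\Delta,\eta))$ where $C$ is a finite nonempty set of counter states, $\delta_0:C\times\Sigma\to C\times\{0,+1\}$ and $\delta_1:C\times\Sigma\to C\times\{-1,0,+1\}$ are deterministic counter transition functions, $p_0\in C$, $Q$ is a finite nonempty set of states, $\lambda,\eta\in\mathbb{F}^{|Q|}$, and $\Delta:\Sigma\times\{0,1\}\to\mathbb{F}^{|Q|\times|Q|}$. A configuration is a triple $(x,p,n)\in\mathbb{F}^{|Q|}\times C\times\mathbb{N}$ (weight vector, counter state, counter value). Reading $a\in\Sigma$ from $(x,p,n)$ with $d=\mathrm{sgn}(n)$ and $\delta_d(p,a)=(p',e)$ leads to $(x\Delta(a,d),p',n+e)$; for each word $w$ and configuration $c$ there is a unique run of $w$ from $c$. For a subspace $V\subseteq\mathbb F^{|Q|}$ let $\overline V=\mathbb F^{|Q|}\setminus V$. For $S\subseteq C$ and $X\subseteq\mathbb N$, a word $z$ is a witness for $(c,\overline V,S,X)$ if the run of $z$ from $c$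 ends in a configuration $(x,p,n)$ with $x\in\overline V$, $p\in S$, $n\in X$; it is a minimal witness if no strictly shorter word is a witness. *)

theory Defs
  imports Main
begin

(* Weight vectors in F^{|Q|} are functions 'q => 'a with 'q a finite type (the state set Q);
   matrices in F^{|Q| x |Q|} are functions 'q => 'q => 'a. *)

type_synonym ('q,'a) fvec = "'q \<Rightarrow> 'a"
type_synonym ('q,'a) fmat = "'q \<Rightarrow> 'q \<Rightarrow> 'a"

definition vec_mat :: "('q::finite,'a::field) fvec \<Rightarrow> ('q,'a) fmat \<Rightarrow> ('q,'a) fvec" where
  "vec_mat x M = (\<lambda>j. \<Sum>i\<in>UNIV. x i * M i j)"

definition is_subspace :: "('q,'a::field) fvec set \<Rightarrow> bool" where
  "is_subspace V \<longleftrightarrow> (\<lambda>_. 0) \<in> V \<and> (\<forall>x\<in>V. \<forall>y\<in>V. (\<lambda>i. x i + y i) \<in> V)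
     \<and> (\<forall>c. \<forall>x\<in>V. (\<lambda>i. c * x i) \<in> V)"

definition sgnN :: "nat \<Rightarrow> nat" where
  "sgnN n = (if n = 0 then 0 else 1)"

(* A weighted ODCA ((C, delta0, delta1, p0), (Q, lambda, Delta, eta)); C = UNIV::'c, Q = UNIV::'q. *)
definition wodca ::
  "('c::finite \<Rightarrow> 's::finite \<Rightarrow> 'c \<times> int) \<Rightarrow> ('c \<Rightarrow> 's \<Rightarrow> 'c \<times> int) \<Rightarrow> 'c \<Rightarrow>
   ('q::finite,'a::field) fvec \<Rightarrow> ('s \<Rightarrow> nat \<Rightarrow> ('q,'a) fmat) \<Rightarrow> ('q,'a) fvec \<Rightarrow> bool" where
  "wodca \<delta>0 \<delta>1 p0 lamv \<Delta> \<eta> \<longleftrightarrow>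
     (\<forall>p a. snd (\<delta>0 p a) \<in> {0, 1}) \<and> (\<forall>p a. snd (\<delta>1 p a) \<in> {-1, 0, 1})"

type_synonym ('q,'a,'c) config = "('q,'a) fvec \<times> 'c \<times> nat"

definition step ::
  "('c \<Rightarrow> 's \<Rightarrow> 'c \<times> int) \<Rightarrow> ('c \<Rightarrow> 's \<Rightarrow> 'c \<times> int) \<Rightarrow> ('s \<Rightarrow> nat \<Rightarrow> ('q::finite,'a::field) fmat)
   \<Rightarrow> ('q,'a,'c) config \<Rightarrow> 's \<Rightarrow> ('q,'a,'c) config" where
  "step \<delta>0 \<delta>1 \<Delta> cf a =
     (case cf of (x, p, n) \<Rightarrow>
        let d = sgnN n; pe = (if d = 0 then \<delta>0 p a else \<delta>1 p a)
        in (vec_mat x (\<Delta> a d), fst pe, nat (int n + snd pe)))"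

definition run ::
  "('c \<Rightarrow> 's \<Rightarrow> 'c \<times> int) \<Rightarrow> ('c \<Rightarrow> 's \<Rightarrow> 'c \<times> int) \<Rightarrow> ('s \<Rightarrow> nat \<Rightarrow> ('q::finite,'a::field) fmat)
   \<Rightarrow> ('q,'a,'c) config \<Rightarrow> 's list \<Rightarrow> ('q,'a,'c) config" where
  "run \<delta>0 \<delta>1 \<Delta> cf w = foldl (step \<delta>0 \<delta>1 \<Delta>) cf w"

(* z is a witness for (c, complement of V, S, X) *)
definition witness where
  "witness \<delta>0 \<delta>1 \<Delta> cf V S X z \<longleftrightarrow>
     (case run \<delta>0 \<delta>1 \<Delta> cf z of (x, p, n) \<Rightarrow> x \<notin> V \<and> p \<in> S \<and> n \<in> X)"

definition minimal_witness where
  "minimal_witness \<delta>0 \<delta>1 \<Delta> cf V S X z \<longleftrightarrow>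
     witness \<delta>0 \<delta>1 \<Delta> cf V S X z \<and>
     (\<forall>z'. length z' < length z \<longrightarrow> \<not> witness \<delta>0 \<delta>1 \<Delta> cf V S X z')"

end

theory Submission
  imports Defs "HOL-Library.Function_Algebras" "HOL.Vector_Spaces"
begin

definition ebas :: "'i \<Rightarrow> 'i \<Rightarrow> 'a::field" where
  "ebas j = (\<lambda>i. if i = j then 1 else 0)"

interpretation fv: vector_space "\<lambda>(c::'a::field) (f::'i \<Rightarrow> 'a) i. c * f i"
  by unfold_locales (auto simp: fun_eq_iff algebra_simps)

lemma fv_sum_apply: "(\<Sum>x\<in>A. (f x :: 'i \<Rightarrow> 'b::comm_monoid_add)) i = (\<Sum>x\<in>A. f x i)"
  by (induction A rule: infinite_finite_induct) auto

lemma ebas_inj: "inj (ebas :: 'i \<Rightarrow> 'i \<Rightarrow> 'a::field)"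
  by (auto simp: inj_def ebas_def fun_eq_iff)

lemma decomp: "(y :: 'i::finite \<Rightarrow> 'a::field) = (\<Sum>j\<in>UNIV. (\<lambda>i. y j * ebas j i))"
  by (auto simp: fun_eq_iff fv_sum_apply ebas_def if_distrib cong: if_cong)

interpretation fvf: finite_dimensional_vector_space "\<lambda>(c::'a::field) (f::'i::finite \<Rightarrow> 'a) i. c * f i"
   "range ebas"
proof
  show "finite (range (ebas :: 'i \<Rightarrow> 'i \<Rightarrow> 'a))" by simp
  show "fv.independent (range (ebas :: 'i \<Rightarrow> 'i \<Rightarrow> 'a))"
  proof (rule fv.independent_if_scalars_zero)
    show "finite (range (ebas :: 'i \<Rightarrow> 'i \<Rightarrow> 'a))" by simp
    fix f :: "('i \<Rightarrow> 'a) \<Rightarrow> 'a" and x :: "'i \<Rightarrow> 'a"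
    assume s: "(\<Sum>x\<in>range ebas. (\<lambda>i. f x * x i)) = 0" and x: "x \<in> range ebas"
    then obtain j where j: "x = ebas j" by auto
    have "(\<Sum>x\<in>range (ebas :: 'i \<Rightarrow> 'i \<Rightarrow> 'a). (\<lambda>i. f x * x i)) j = (\<Sum>k\<in>UNIV. f (ebas k) * ebas k j)"
      by (simp add: fv_sum_apply sum.reindex[OF ebas_inj])
    also have "\<dots> = f (ebas j)"
      by (simp add: ebas_def if_distrib cong: if_cong)
    finally show "f x = 0" using s j by simp
  qed
  show "fv.span (range (ebas :: 'i \<Rightarrow> 'i \<Rightarrow> 'a)) = UNIV"
  proof safe
    fix y :: "'i \<Rightarrow> 'a"
    have "(\<Sum>j\<in>UNIV. (\<lambda>i. y j * ebas j i)) \<in> fv.span (range (ebas :: 'i \<Rightarrow> 'i \<Rightarrow> 'a))"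
      by (intro fv.span_sum fv.span_scale) (auto intro: fv.span_base)
    then show "y \<in> fv.span (range ebas)" using decomp[of y] by simp
  qed simp
qed

lemma fv_dim_le: "fv.dim (W :: ('i::finite \<Rightarrow> 'a::field) set) \<le> card (UNIV :: 'i set)"
  using fvf.dim_subset_UNIV[of W] by (simp add: fvf.dimension_def card_image[OF ebas_inj])



lemma chain_drops:
  fixes W :: "nat \<Rightarrow> ('i::finite \<Rightarrow> 'a::field) set"
  assumes sub: "\<And>k. fv.subspace (W k)" and anti: "\<And>k. W (Suc k) \<subseteq> W k" and ab: "a \<le> b"
  shows "card {j \<in> {a..<b}. W (Suc j) \<noteq> W j} + fv.dim (W b) \<le> fv.dim (W a)"
  using ab
proof (induction b rule: dec_induct)
  case base then show ?case by simp
next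
  case (step b)
  have le: "fv.dim (W (Suc b)) \<le> fv.dim (W b)" using anti fvf.dim_subset by blast
  show ?case
  proof (cases "W (Suc b) = W b")
    case True
    have "{j \<in> {a..<Suc b}. W (Suc j) \<noteq> W j} = {j \<in> {a..<b}. W (Suc j) \<noteq> W j}"
      using True by (auto simp: less_Suc_eq)
    then show ?thesis using step True by simp
  next
    case False
    have "fv.span (W (Suc b)) \<subset> fv.span (W b)" using False anti sub
      by (metis fv.span_eq_iff psubsetI)
    then have lt: "fv.dim (W (Suc b)) < fv.dim (W b)" by (rule fvf.dim_psubset)
    have "{j \<in> {a..<Suc b}. W (Suc j) \<noteq> W j} = insert b {j \<in> {a..<b}. W (Suc j) \<noteq> W j}"
      using False step.hyps by (auto simp: less_Suc_eq)
    then have "card {j \<in> {a..<Suc b}. W (Suc j) \<noteq> W j} = Suc (card {j \<in> {a..<b}. W (Suc j) \<noteq> W j})"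
      by simp
    then show ?thesis using step lt by simp
  qed
qed

lemma run_Nil[simp]: "run d0 d1 D cf [] = cf" by (simp add: run_def)
lemma run_Cons[simp]: "run d0 d1 D cf (a # w) = run d0 d1 D (step d0 d1 D cf a) w" by (simp add: run_def)
lemma run_append: "run d0 d1 D cf (u @ w) = run d0 d1 D (run d0 d1 D cf u) w" by (simp add: run_def)

lemma step_simp: "step d0 d1 D (y, q, m) a =
   (vec_mat y (D a (sgnN m)), fst (if sgnN m = 0 then d0 q a else d1 q a),
    nat (int m + snd (if sgnN m = 0 then d0 q a else d1 q a)))"
  by (simp add: step_def Let_def)

definition cstep where
  "cstep d0 d1 q m a = (let pe = (if sgnN m = 0 then d0 q a else d1 q a) in (fst pe, nat (int m + snd pe)))"

lemma step_split: "step d0 d1 D (y, q, m) a = (vec_mat y (D a (sgnN m)), cstep d0 d1 q m a)"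
  by (simp add: step_def cstep_def Let_def)

lemma run_snd_indep: "snd (run d0 d1 D (y, q, m) w) = snd (run d0 d1 D (y', q, m) w)"
proof (induction w arbitrary: y y' q m)
  case Nil then show ?case by simp
next
  case (Cons a w)
  obtain q' m' where c: "cstep d0 d1 q m a = (q', m')" by fastforce
  show ?case using Cons.IH[of "vec_mat y (D a (sgnN m))" q' m' "vec_mat y' (D a (sgnN m))"]
    by (simp add: step_split c)
qed

lemma vec_mat_add: "vec_mat (\<lambda>i. x i + y i) M = (\<lambda>j. vec_mat x M j + vec_mat y M j)"
  by (simp add: vec_mat_def fun_eq_iff sum.distrib distrib_right)

lemma vec_mat_scale: "vec_mat (\<lambda>i. c * x i) M = (\<lambda>j. c * vec_mat x M j)"
  by (simp add: vec_mat_def fun_eq_iff sum_distrib_left mult.assoc)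

lemma vec_mat_zero: "vec_mat (\<lambda>_. 0) M = (\<lambda>_. 0)"
  by (simp add: vec_mat_def fun_eq_iff)

lemma run_add: "fst (run d0 d1 D (\<lambda>i. y i + y' i, q, m) w) = (\<lambda>j. fst (run d0 d1 D (y, q, m) w) j + fst (run d0 d1 D (y', q, m) w) j)"
proof (induction w arbitrary: y y' q m)
  case Nil then show ?case by simp
next
  case (Cons a w)
  obtain q' m' where c: "cstep d0 d1 q m a = (q', m')" by fastforce
  show ?case using Cons.IH[of "vec_mat y (D a (sgnN m))" "vec_mat y' (D a (sgnN m))" q' m']
    by (simp add: step_split c vec_mat_add)
qed

lemma run_scale: "fst (run d0 d1 D (\<lambda>i. c * y i, q, m) w) = (\<lambda>j. c * fst (run d0 d1 D (y, q, m) w) j)"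
proof (induction w arbitrary: y q m)
  case Nil then show ?case by simp
next
  case (Cons a w)
  obtain q' m' where c: "cstep d0 d1 q m a = (q', m')" by fastforce
  show ?case using Cons.IH[of "vec_mat y (D a (sgnN m))" q' m']
    by (simp add: step_split c vec_mat_scale)
qed

lemma run_zero: "fst (run d0 d1 D (\<lambda>_. 0, q, m) w) = (\<lambda>_. 0)"
proof (induction w arbitrary: q m)
  case Nil then show ?case by simp
next
  case (Cons a w)
  obtain q' m' where c: "cstep d0 d1 q m a = (q', m')" by fastforce
  show ?case using Cons.IH[of q' m'] by (simp add: step_split c vec_mat_zero)
qed

lemma run_expand:
  "fst (run d0 d1 D (y, q, m) w) l = (\<Sum>i\<in>UNIV. y i * fst (run d0 d1 D (ebas i, q, m) w) l)"
proof (induction w arbitrary: y q m)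
  case Nil then show ?case by (simp add: ebas_def if_distrib cong: if_cong)
next
  case (Cons a w)
  obtain q' m' where c: "cstep d0 d1 q m a = (q', m')" by fastforce
  let ?M = "D a (sgnN m)"
  let ?R = "\<lambda>j. fst (run d0 d1 D (ebas j, q', m') w) l"
  have "fst (run d0 d1 D (y, q, m) (a # w)) l = (\<Sum>j\<in>UNIV. vec_mat y ?M j * ?R j)"
    using Cons.IH[of "vec_mat y ?M" q' m'] by (simp add: step_split c)
  also have "\<dots> = (\<Sum>j\<in>UNIV. \<Sum>i\<in>UNIV. y i * (?M i j * ?R j))"
    by (simp add: vec_mat_def sum_distrib_right mult.assoc)
  also have "\<dots> = (\<Sum>i\<in>UNIV. y i * (\<Sum>j\<in>UNIV. ?M i j * ?R j))"
    by (subst sum.swap) (simp add: sum_distrib_left)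
  also have "\<dots> = (\<Sum>i\<in>UNIV. y i * fst (run d0 d1 D (ebas i, q, m) (a # w)) l)"
  proof (rule sum.cong[OF refl])
    fix i
    have "vec_mat (ebas i) ?M = ?M i"
    proof
      fix j
      have "vec_mat (ebas i) ?M j = (\<Sum>k\<in>UNIV. if k = i then ?M k j else 0)"
        unfolding vec_mat_def ebas_def by (rule sum.cong) auto
      then show "vec_mat (ebas i) ?M j = ?M i j" by simp
    qed
    then show "y i * (\<Sum>j\<in>UNIV. ?M i j * ?R j) = y i * fst (run d0 d1 D (ebas i, q, m) (a # w)) l"
      using Cons.IH[of "vec_mat (ebas i) ?M" q' m'] by (simp add: step_split c)
  qed
  finally show ?case .
qed

lemma is_subspace_fv: "is_subspace V \<Longrightarrow> fv.subspace V"
  unfolding is_subspace_def fv.subspace_def by (simp add: zero_fun_def plus_fun_def)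



lemma cstep_bounds:
  fixes d0 d1 :: "'c \<Rightarrow> 's \<Rightarrow> 'c \<times> int"
  assumes e0: "snd (d0 q a) \<in> {0,1}" and e1: "snd (d1 q a) \<in> {-1,0,1}"
  shows "snd (cstep d0 d1 q m a) \<le> m + 1" "m \<le> snd (cstep d0 d1 q m a) + 1"
  using e0 e1 by (auto simp: cstep_def Let_def sgnN_def)

lemma cstep_pos:
  "1 \<le> m \<Longrightarrow> cstep d0 d1 q m a = (fst (d1 q a), nat (int m + snd (d1 q a)))"
  by (simp add: cstep_def Let_def sgnN_def)

lemma run_shift:
  assumes e1: "\<And>q a. snd (d1 q a) \<in> {-1,0,1}"
    and hyp: "\<forall>t<length w. d + 1 \<le> snd (snd (run d0 d1 D (y, q, m + d) (take t w)))"
  shows "run d0 d1 D (y, q, m) w =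
    (fst (run d0 d1 D (y, q, m + d) w), fst (snd (run d0 d1 D (y, q, m + d) w)),
     snd (snd (run d0 d1 D (y, q, m + d) w)) - d)"
  using hyp
proof (induction w arbitrary: y q m)
  case Nil then show ?case by simp
next
  case (Cons a w)
  from Cons.prems[rule_format, of 0] have m1: "1 \<le> m" by simp
  have sg: "sgnN m = 1" "sgnN (m + d) = 1" using m1 by (auto simp: sgnN_def)
  define m' where "m' = nat (int m + snd (d1 q a))"
  have md: "nat (int (m + d) + snd (d1 q a)) = m' + d"
    using e1[of q a] m1 unfolding m'_def by auto
  have c1: "cstep d0 d1 q m a = (fst (d1 q a), m')" using cstep_pos[OF m1] m'_def by simp
  have c2: "cstep d0 d1 q (m + d) a = (fst (d1 q a), m' + d)" using cstep_pos[of "m + d" d0 d1 q a] m1 md by simp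
  let ?y = "vec_mat y (D a 1)"
  have "\<forall>t<length w. d + 1 \<le> snd (snd (run d0 d1 D (?y, fst (d1 q a), m' + d) (take t w)))"
  proof (intro allI impI)
    fix t assume "t < length w"
    then have "Suc t < length (a # w)" by simp
    from Cons.prems[rule_format, OF this] show "d + 1 \<le> snd (snd (run d0 d1 D (?y, fst (d1 q a), m' + d) (take t w)))"
      by (simp add: step_split c2 sg)
  qed
  from Cons.IH[OF this] show ?case by (simp add: step_split c1 c2 sg)
qed


lemma cstep_inf: "fst (cstep d1 d1 q m a) = fst (d1 q a)"
  by (simp add: cstep_def Let_def)

lemma inf_indep:
  "fst (run d1 d1 (\<lambda>a _. D a 1) (y, q, m) w) = fst (run d1 d1 (\<lambda>a _. D a 1) (y, q, m') w) \<and>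
   fst (snd (run d1 d1 (\<lambda>a _. D a 1) (y, q, m) w)) = fst (snd (run d1 d1 (\<lambda>a _. D a 1) (y, q, m') w))"
proof (induction w arbitrary: y q m m')
  case Nil then show ?case by simp
next
  case (Cons a w)
  obtain q1 m1 where c1: "cstep d1 d1 q m a = (q1, m1)" by fastforce
  obtain q2 m2 where c2: "cstep d1 d1 q m' a = (q2, m2)" by fastforce
  have "q1 = fst (d1 q a)" "q2 = fst (d1 q a)" using cstep_inf[of d1 q m a] cstep_inf[of d1 q m' a] c1 c2 by auto
  then show ?case using Cons.IH[of "vec_mat y (D a 1)" q1 m1 m2] by (simp add: step_split c1 c2)
qed

lemma run_agree:
  assumes hyp: "\<forall>t<length w. 1 \<le> snd (snd (run d0 d1 D (y, q, m) (take t w)))"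
  shows "fst (run d0 d1 D (y, q, m) w) = fst (run d1 d1 (\<lambda>a _. D a 1) (y, q, m') w) \<and>
   fst (snd (run d0 d1 D (y, q, m) w)) = fst (snd (run d1 d1 (\<lambda>a _. D a 1) (y, q, m') w))"
  using hyp
proof (induction w arbitrary: y q m m')
  case Nil then show ?case by simp
next
  case (Cons a w)
  from Cons.prems[rule_format, of 0] have m1: "1 \<le> m" by simp
  have sg: "sgnN m = 1" using m1 by (auto simp: sgnN_def)
  define mm where "mm = nat (int m + snd (d1 q a))"
  have c1: "cstep d0 d1 q m a = (fst (d1 q a), mm)" using cstep_pos[OF m1] mm_def by simp
  obtain q2 m2 where c2: "cstep d1 d1 q m' a = (q2, m2)" by fastforce
  have q2: "q2 = fst (d1 q a)" using cstep_inf[of d1 q m' a] c2 by auto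
  have "\<forall>t<length w. 1 \<le> snd (snd (run d0 d1 D (vec_mat y (D a 1), fst (d1 q a), mm) (take t w)))"
  proof (intro allI impI)
    fix t assume "t < length w"
    then have "Suc t < length (a # w)" by simp
    from Cons.prems[rule_format, OF this] show "1 \<le> snd (snd (run d0 d1 D (vec_mat y (D a 1), fst (d1 q a), mm) (take t w)))"
      by (simp add: step_split c1 sg)
  qed
  from Cons.IH[OF this, of m2] show ?case by (simp add: step_split c1 c2 sg q2)
qed

lemma run_cnt_lower:
  assumes e0: "\<And>q a. snd (d0 q a) \<in> {0,1}" and e1: "\<And>q a. snd (d1 q a) \<in> {-1,0,1}"
  shows "m - t \<le> snd (snd (run d0 d1 D (y, q, m) (take t w)))"
proof (induction w arbitrary: y q m t)
  case Nil then show ?case by simp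
next
  case (Cons a w)
  show ?case
  proof (cases t)
    case 0 then show ?thesis by simp
  next
    case (Suc t')
    obtain q' m' where c: "cstep d0 d1 q m a = (q', m')" by fastforce
    have "m \<le> m' + 1" using e0[of q a] e1[of q a] cstep_bounds(2)[of d0 q a d1 m] c by simp
    moreover have "m' - t' \<le> snd (snd (run d0 d1 D (vec_mat y (D a (sgnN m)), q', m') (take t' w)))"
      by (rule Cons.IH)
    ultimately show ?thesis using Suc by (simp add: step_split c)
  qed
qed



locale mw =
  fixes d0 d1 :: "'c::finite \<Rightarrow> 's \<Rightarrow> 'c \<times> int"
    and D :: "'s \<Rightarrow> nat \<Rightarrow> ('q::finite, 'a::field) fmat"
    and c0 :: "('q,'a,'c) config" and V :: "('q,'a) fvec set" and S :: "'c set" and z :: "'s list"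
  assumes e0: "\<And>q a. snd (d0 q a) \<in> {0,1}" and e1: "\<And>q a. snd (d1 q a) \<in> {-1,0,1}"
    and subV: "fv.subspace V"
    and minw: "minimal_witness d0 d1 D c0 V S UNIV z"
begin

abbreviation "R \<equiv> run d0 d1 D"
abbreviation "L \<equiv> length z"
definition "cfg i = R c0 (take i z)"
definition "vec i = fst (cfg i)"
definition "pos i = fst (snd (cfg i))"
definition "cnt i = snd (snd (cfg i))"

lemma cfg_eq: "cfg i = (vec i, pos i, cnt i)"
  by (simp add: vec_def pos_def cnt_def)

lemma endL: "vec L \<notin> V" "pos L \<in> S"
  using minw unfolding minimal_witness_def witness_def vec_def pos_def cfg_def
  by (auto split: prod.splits)

lemma nowit: assumes "length w < L" "fst (snd (R c0 w)) \<in> S" shows "fst (R c0 w) \<in> V"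
proof -
  have "\<not> witness d0 d1 D c0 V S UNIV w" using minw assms(1) unfolding minimal_witness_def by blast
  then show ?thesis using assms(2) unfolding witness_def by (cases "R c0 w") auto
qed

lemma cfg_add: "i + t \<le> L \<Longrightarrow> cfg (i + t) = R (cfg i) (take t (drop i z))"
  unfolding cfg_def by (simp add: run_append[symmetric] take_add)

lemma cfg_L: "i \<le> L \<Longrightarrow> R (cfg i) (drop i z) = cfg L"
  unfolding cfg_def by (simp add: run_append[symmetric])

lemma cfg_L': "i \<le> L \<Longrightarrow> R (vec i, pos i, cnt i) (drop i z) = cfg L"
  using cfg_L cfg_eq by metis

lemma cnt_step: assumes "i < L" shows "cnt (Suc i) \<le> cnt i + 1" "cnt i \<le> cnt (Suc i) + 1"
proof -
  have "cfg (Suc i) = step d0 d1 D (cfg i) (z ! i)"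
    unfolding cfg_def using assms by (simp add: take_Suc_conv_app_nth run_append)
  then have "cnt (Suc i) = snd (cstep d0 d1 (pos i) (cnt i) (z ! i))"
    by (simp add: cfg_eq step_split) (metis snd_conv)
  then show "cnt (Suc i) \<le> cnt i + 1" "cnt i \<le> cnt (Suc i) + 1"
    using cstep_bounds[of d0 "pos i" "z ! i" d1 "cnt i"] e0 e1 by auto
qed

lemma snd_run_cfg: "i + t \<le> L \<Longrightarrow> snd (R (y, pos i, cnt i) (take t (drop i z))) = (pos (i + t), cnt (i + t))"
  using cfg_add[of i t] run_snd_indep[of d0 d1 D y "pos i" "cnt i" _ "vec i"]
  by (simp add: cfg_eq) (metis snd_conv)

lemma snd_run_L: "i \<le> L \<Longrightarrow> snd (R (y, pos i, cnt i) (drop i z)) = (pos L, cnt L)"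
  using cfg_L'[of i] run_snd_indep[of d0 d1 D y "pos i" "cnt i" _ "vec i"]
  by (simp add: cfg_eq)


definition "W k q m = {y. \<forall>w. length w < k \<longrightarrow> fst (snd (R (y, q, m) w)) \<in> S \<longrightarrow> fst (R (y, q, m) w) \<in> V}"

lemma W_sub: "fv.subspace (W k q m)"
proof (rule fv.subspaceI)
  show "0 \<in> W k q m"
    unfolding W_def using run_zero[of d0 d1 D q m] fv.subspace_0[OF subV]
    by (simp add: zero_fun_def)
next
  fix y y' assume y: "y \<in> W k q m" and y': "y' \<in> W k q m"
  show "y + y' \<in> W k q m" unfolding W_def
  proof (intro CollectI allI impI)
    fix w assume w: "length w < k" and s: "fst (snd (R (y + y', q, m) w)) \<in> S"
    have s1: "fst (snd (R (y, q, m) w)) \<in> S" "fst (snd (R (y', q, m) w)) \<in> S"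
      using s run_snd_indep[of d0 d1 D "y + y'" q m w y] run_snd_indep[of d0 d1 D "y + y'" q m w y'] by auto
    have "fst (R (y, q, m) w) \<in> V" "fst (R (y', q, m) w) \<in> V" using y y' w s1 unfolding W_def by auto
    then have "fst (R (y, q, m) w) + fst (R (y', q, m) w) \<in> V" using fv.subspace_add[OF subV] by blast
    moreover have "y + y' = (\<lambda>i. y i + y' i)" by (simp add: plus_fun_def)
    ultimately show "fst (R (y + y', q, m) w) \<in> V" using run_add[of d0 d1 D y y' q m w]
      by (simp add: plus_fun_def)
  qed
next
  fix c :: 'a and y assume y: "y \<in> W k q m"
  show "(\<lambda>i. c * y i) \<in> W k q m" unfolding W_def
  proof (intro CollectI allI impI)
    fix w assume w: "length w < k" and s: "fst (snd (R (\<lambda>i. c * y i, q, m) w)) \<in> S"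
    have s1: "fst (snd (R (y, q, m) w)) \<in> S"
      using s run_snd_indep[of d0 d1 D "\<lambda>i. c * y i" q m w y] by auto
    have "fst (R (y, q, m) w) \<in> V" using y w s1 unfolding W_def by auto
    then have "(\<lambda>j. c * fst (R (y, q, m) w) j) \<in> V" using fv.subspace_scale[OF subV] by blast
    then show "fst (R (\<lambda>i. c * y i, q, m) w) \<in> V" by (simp add: run_scale)
  qed
qed

lemma W_anti: "W (Suc k) q m \<subseteq> W k q m"
  unfolding W_def by auto

lemma W_1: "W 1 q m = {y. q \<in> S \<longrightarrow> y \<in> V}"
  unfolding W_def by auto

lemma vec_in_W: assumes "i \<le> L" shows "vec i \<in> W (L - i) (pos i) (cnt i)"
  unfolding W_def
proof (intro CollectI allI impI)
  fix w assume w: "length w < L - i" and s: "fst (snd (R (vec i, pos i, cnt i) w)) \<in> S"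
  have eq: "R c0 (take i z @ w) = R (vec i, pos i, cnt i) w"
    by (simp add: run_append cfg_eq[symmetric] cfg_def)
  have "length (take i z @ w) < L" using w assms by simp
  from nowit[OF this] show "fst (R (vec i, pos i, cnt i) w) \<in> V" using s eq by simp
qed

lemma vec_notin_W: assumes "i \<le> L" shows "vec i \<notin> W (Suc (L - i)) (pos i) (cnt i)"
proof
  assume "vec i \<in> W (Suc (L - i)) (pos i) (cnt i)"
  then have "fst (snd (R (vec i, pos i, cnt i) (drop i z))) \<in> S \<longrightarrow> fst (R (vec i, pos i, cnt i) (drop i z)) \<in> V"
    unfolding W_def using assms by auto
  then show False using cfg_L'[OF assms] endL by (simp add: cfg_eq)
qed

lemma dim_W1: "fv.dim (W 1 q m) \<le> card (UNIV::'q set) - (if q \<in> S then 1 else 0)"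
proof (cases "q \<in> S")
  case True
  then have eq: "W 1 q m = V" using W_1[of q m] by auto
  have "V \<noteq> UNIV" using endL by auto
  then have "fv.span V \<subset> fv.span UNIV" using subV by (simp add: fv.span_eq_iff[THEN iffD2] less_le)
  then have "fv.dim V < fv.dim (UNIV :: ('q \<Rightarrow> 'a) set)" by (rule fvf.dim_psubset)
  moreover have "fv.dim (UNIV :: ('q \<Rightarrow> 'a) set) \<le> card (UNIV::'q set)" by (rule fv_dim_le)
  ultimately show ?thesis using True eq by simp
next
  case False then show ?thesis using fv_dim_le by simp
qed

lemma claimA_q: "card {i. i < L \<and> cnt i = m \<and> pos i = q} \<le> fv.dim (W 1 q m)"
proof -
  let ?T = "{j \<in> {1..<Suc L}. W (Suc j) q m \<noteq> W j q m}"
  let ?I = "{i. i < L \<and> cnt i = m \<and> pos i = q}"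
  have sub: "(\<lambda>i. L - i) ` ?I \<subseteq> ?T"
  proof
    fix j assume "j \<in> (\<lambda>i. L - i) ` ?I"
    then obtain i where i: "i < L" "cnt i = m" "pos i = q" "j = L - i" by blast
    have "vec i \<in> W j q m" using vec_in_W[of i] i by simp
    moreover have "vec i \<notin> W (Suc j) q m" using vec_notin_W[of i] i by simp
    ultimately have "W (Suc j) q m \<noteq> W j q m" by blast
    moreover have "j \<in> {1..<Suc L}" using i(1,4) by (simp add: Suc_le_eq)
    ultimately show "j \<in> ?T" by blast
  qed
  have inj: "inj_on (\<lambda>i. L - i) ?I"
    unfolding inj_on_def by auto
  have "card ?I = card ((\<lambda>i. L - i) ` ?I)" using card_image[OF inj] by simp
  also have "\<dots> \<le> card ?T" by (rule card_mono[OF _ sub]) simp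
  finally have c1: "card ?I \<le> card ?T" .
  have "card ?T + fv.dim (W (Suc L) q m) \<le> fv.dim (W 1 q m)"
    by (rule chain_drops[of "\<lambda>k. W k q m"]) (simp_all add: W_sub W_anti)
  then show ?thesis using c1 by linarith
qed

lemma claimA: "card {i. i < L \<and> cnt i = m} \<le> card (UNIV::'q set) * card (UNIV::'c set) - 1"
proof -
  let ?f = "\<lambda>q::'c. card (UNIV::'q set) - (if q \<in> S then 1 else 0)"
  have un: "{i. i < L \<and> cnt i = m} = (\<Union>q\<in>UNIV. {i. i < L \<and> cnt i = m \<and> pos i = q})" by blast
  have "card {i. i < L \<and> cnt i = m} \<le> (\<Sum>q\<in>UNIV. card {i. i < L \<and> cnt i = m \<and> pos i = q})"
    unfolding un by (rule card_UN_le) simp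
  also have "\<dots> \<le> (\<Sum>q\<in>UNIV. ?f q)"
  proof (rule sum_mono)
    fix q :: 'c
    show "card {i. i < L \<and> cnt i = m \<and> pos i = q} \<le> ?f q"
      using claimA_q[of m q] dim_W1[of q m] by linarith
  qed
  also have "(\<Sum>q\<in>UNIV. ?f q) = ?f (pos L) + (\<Sum>q\<in>UNIV - {pos L}. ?f q)"
    by (rule sum.remove) simp_all
  also have "\<dots> \<le> (card (UNIV::'q set) - 1) + (\<Sum>q\<in>UNIV - {pos L}. card (UNIV::'q set))"
    using endL(2) by (intro add_mono sum_mono) auto
  also have "\<dots> = (card (UNIV::'q set) - 1) + (card (UNIV::'c set) - 1) * card (UNIV::'q set)"
    by (simp add: card_Diff_singleton)
  also have "\<dots> = card (UNIV::'q set) * card (UNIV::'c set) - 1"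
  proof -
    have "card (UNIV::'q set) \<ge> 1" "card (UNIV::'c set) \<ge> 1" by (simp_all add: Suc_le_eq card_gt_0_iff)
    then obtain a b where "card (UNIV::'q set) = Suc a" "card (UNIV::'c set) = Suc b"
      using Suc_le_D by (metis One_nat_def)
    then show ?thesis by (simp add: algebra_simps)
  qed
  finally show ?thesis .
qed

end



context mw
begin

abbreviation "Ri \<equiv> run d1 d1 (\<lambda>a _. D a 1)"

definition "Ui k q = {y. \<forall>w. length w < k \<longrightarrow> fst (snd (Ri (y, q, 0) w)) \<in> S \<longrightarrow> fst (Ri (y, q, 0) w) \<in> V}"

lemma Ui_sub: "fv.subspace (Ui k q)"
proof (rule fv.subspaceI)
  show "0 \<in> Ui k q"
    unfolding Ui_def using run_zero[of d1 d1 "\<lambda>a _. D a 1" q 0] fv.subspace_0[OF subV]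
    by (simp add: zero_fun_def)
next
  fix y y' assume y: "y \<in> Ui k q" and y': "y' \<in> Ui k q"
  show "y + y' \<in> Ui k q" unfolding Ui_def
  proof (intro CollectI allI impI)
    fix w assume w: "length w < k" and s: "fst (snd (Ri (y + y', q, 0) w)) \<in> S"
    have s1: "fst (snd (Ri (y, q, 0) w)) \<in> S" "fst (snd (Ri (y', q, 0) w)) \<in> S"
      using s run_snd_indep[of d1 d1 "\<lambda>a _. D a 1" "y + y'" q 0 w y] run_snd_indep[of d1 d1 "\<lambda>a _. D a 1" "y + y'" q 0 w y'] by auto
    have "fst (Ri (y, q, 0) w) \<in> V" "fst (Ri (y', q, 0) w) \<in> V" using y y' w s1 unfolding Ui_def by auto
    then have "fst (Ri (y, q, 0) w) + fst (Ri (y', q, 0) w) \<in> V" using fv.subspace_add[OF subV] by blast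
    then show "fst (Ri (y + y', q, 0) w) \<in> V" using run_add[of d1 d1 "\<lambda>a _. D a 1" y y' q 0 w]
      by (simp add: plus_fun_def)
  qed
next
  fix c :: 'a and y assume y: "y \<in> Ui k q"
  show "(\<lambda>i. c * y i) \<in> Ui k q" unfolding Ui_def
  proof (intro CollectI allI impI)
    fix w assume w: "length w < k" and s: "fst (snd (Ri (\<lambda>i. c * y i, q, 0) w)) \<in> S"
    have s1: "fst (snd (Ri (y, q, 0) w)) \<in> S"
      using s run_snd_indep[of d1 d1 "\<lambda>a _. D a 1" "\<lambda>i. c * y i" q 0 w y] by auto
    have "fst (Ri (y, q, 0) w) \<in> V" using y w s1 unfolding Ui_def by auto
    then have "(\<lambda>j. c * fst (Ri (y, q, 0) w) j) \<in> V" using fv.subspace_scale[OF subV] by blast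
    then show "fst (Ri (\<lambda>i. c * y i, q, 0) w) \<in> V" by (simp add: run_scale)
  qed
qed

lemma Ui_anti: "k \<le> k' \<Longrightarrow> Ui k' q \<subseteq> Ui k q"
  unfolding Ui_def by auto

lemma Ri_Cons:
  "fst (Ri (y, q, 0) (a # w)) = fst (Ri (vec_mat y (D a 1), fst (d1 q a), 0) w) \<and>
   fst (snd (Ri (y, q, 0) (a # w))) = fst (snd (Ri (vec_mat y (D a 1), fst (d1 q a), 0) w))"
proof -
  obtain q' m' where c: "cstep d1 d1 q 0 a = (q', m')" by fastforce
  have q': "q' = fst (d1 q a)" using cstep_inf[of d1 q 0 a] c by auto
  show ?thesis using inf_indep[where y="vec_mat y (D a 1)" and q=q' and w=w and m=m' and m'=0]
    by (simp add: step_split c q')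
qed

lemma Ui_Suc: "y \<in> Ui (Suc k) q \<longleftrightarrow> (q \<in> S \<longrightarrow> y \<in> V) \<and> (\<forall>a. vec_mat y (D a 1) \<in> Ui k (fst (d1 q a)))"
proof
  assume y: "y \<in> Ui (Suc k) q"
  have "q \<in> S \<longrightarrow> y \<in> V" using y[unfolded Ui_def, simplified, rule_format, of "[]"] by simp
  moreover have "\<forall>a. vec_mat y (D a 1) \<in> Ui k (fst (d1 q a))"
    unfolding Ui_def
  proof (intro allI CollectI impI)
    fix a w assume "length w < k" "fst (snd (Ri (vec_mat y (D a 1), fst (d1 q a), 0) w)) \<in> S"
    then show "fst (Ri (vec_mat y (D a 1), fst (d1 q a), 0) w) \<in> V"
      using y[unfolded Ui_def, simplified, rule_format, of "a # w"] Ri_Cons[of y q a w] by simp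
  qed
  ultimately show "(q \<in> S \<longrightarrow> y \<in> V) \<and> (\<forall>a. vec_mat y (D a 1) \<in> Ui k (fst (d1 q a)))" ..
next
  assume h: "(q \<in> S \<longrightarrow> y \<in> V) \<and> (\<forall>a. vec_mat y (D a 1) \<in> Ui k (fst (d1 q a)))"
  show "y \<in> Ui (Suc k) q" unfolding Ui_def
  proof (intro CollectI allI impI)
    fix w assume w: "length w < Suc k" and s: "fst (snd (Ri (y, q, 0) w)) \<in> S"
    show "fst (Ri (y, q, 0) w) \<in> V"
    proof (cases w)
      case Nil then show ?thesis using h s by simp
    next
      case (Cons a w')
      have "vec_mat y (D a 1) \<in> Ui k (fst (d1 q a))" using h by blast
      then show ?thesis using w s Ri_Cons[of y q a w'] Cons unfolding Ui_def by auto
    qed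
  qed
qed

definition "E k = {Y :: 'c \<times> 'q \<Rightarrow> 'a. \<forall>q. (\<lambda>i. Y (q, i)) \<in> Ui k q}"

lemma E_sub: "fv.subspace (E k)"
proof (rule fv.subspaceI)
  show "0 \<in> E k" unfolding E_def using fv.subspace_0[OF Ui_sub] by (simp add: zero_fun_def)
next
  fix Y Y' assume "Y \<in> E k" "Y' \<in> E k"
  then show "Y + Y' \<in> E k" unfolding E_def using fv.subspace_add[OF Ui_sub]
    by (auto simp: plus_fun_def)
next
  fix c :: 'a and Y assume "Y \<in> E k"
  then show "(\<lambda>i. c * Y i) \<in> E k" unfolding E_def using fv.subspace_scale[OF Ui_sub] by auto
qed

lemma E_anti: "E (Suc k) \<subseteq> E k"
  unfolding E_def using Ui_anti[of k "Suc k"] by auto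

lemma E_eq_Ui: assumes "E k = E (Suc k)" shows "Ui k q = Ui (Suc k) q"
proof
  show "Ui (Suc k) q \<subseteq> Ui k q" by (rule Ui_anti) simp
  show "Ui k q \<subseteq> Ui (Suc k) q"
  proof
    fix y assume y: "y \<in> Ui k q"
    define Y where "Y = (\<lambda>(q', i). if q' = q then y i else (0::'a))"
    have "Y \<in> E k" unfolding E_def
    proof (intro CollectI allI)
      fix q'
      show "(\<lambda>i. Y (q', i)) \<in> Ui k q'"
      proof (cases "q' = q")
        case True then show ?thesis using y by (simp add: Y_def)
      next
        case False then show ?thesis using fv.subspace_0[OF Ui_sub, of k q'] by (simp add: Y_def zero_fun_def)
      qed
    qed
    then have "Y \<in> E (Suc k)" using assms by simp
    then have "(\<lambda>i. Y (q, i)) \<in> Ui (Suc k) q" unfolding E_def by blast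
    then show "y \<in> Ui (Suc k) q" by (simp add: Y_def)
  qed
qed

lemma E_stable: assumes "E k = E (Suc k)" shows "E (Suc k) = E (Suc (Suc k))"
proof -
  have "\<And>q. Ui (Suc k) q = Ui (Suc (Suc k)) q"
  proof -
    fix q
    have eq: "\<And>q. Ui k q = Ui (Suc k) q" using E_eq_Ui[OF assms] .
    show "Ui (Suc k) q = Ui (Suc (Suc k)) q"
    proof (intro set_eqI)
      fix y
      have "y \<in> Ui (Suc (Suc k)) q \<longleftrightarrow> (q \<in> S \<longrightarrow> y \<in> V) \<and> (\<forall>a. vec_mat y (D a 1) \<in> Ui (Suc k) (fst (d1 q a)))"
        by (rule Ui_Suc)
      also have "\<dots> \<longleftrightarrow> (q \<in> S \<longrightarrow> y \<in> V) \<and> (\<forall>a. vec_mat y (D a 1) \<in> Ui k (fst (d1 q a)))"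
        using eq by presburger
      also have "\<dots> \<longleftrightarrow> y \<in> Ui (Suc k) q" by (rule Ui_Suc[symmetric])
      finally show "y \<in> Ui (Suc k) q \<longleftrightarrow> y \<in> Ui (Suc (Suc k)) q" by simp
    qed
  qed
  then show ?thesis unfolding E_def by simp
qed

lemma E_stable_all: "E k = E (Suc k) \<Longrightarrow> E (k + t) = E (Suc (k + t))"
proof (induction t)
  case 0 then show ?case by simp
next
  case (Suc t) then show ?case using E_stable[of "k + t"] by simp
qed

lemma E_drop_bound: assumes "E (Suc j) \<noteq> E j" shows "Suc j \<le> card (UNIV :: ('c \<times> 'q) set)"
proof -
  have all: "E (Suc j') \<noteq> E j'" if "j' \<le> j" for j'
  proof
    assume "E (Suc j') = E j'"
    then have "E (j' + (j - j')) = E (Suc (j' + (j - j')))" using E_stable_all[of j' "j - j'"] by simp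
    then show False using assms that by simp
  qed
  have "{j' \<in> {0..<Suc j}. E (Suc j') \<noteq> E j'} = {0..<Suc j}" using all by auto
  moreover have "card {j' \<in> {0..<Suc j}. E (Suc j') \<noteq> E j'} + fv.dim (E (Suc j)) \<le> fv.dim (E 0)"
    by (rule chain_drops) (simp_all add: E_sub E_anti)
  ultimately have "Suc j \<le> fv.dim (E 0)" by simp
  also have "\<dots> \<le> card (UNIV :: ('c \<times> 'q) set)" by (rule fv_dim_le)
  finally show ?thesis .
qed

lemma Ui_0: "Ui 0 q = UNIV" unfolding Ui_def by simp

lemma infwit: assumes "y \<notin> Ui k q" shows "y \<notin> Ui (card (UNIV :: ('c \<times> 'q) set)) q"
proof -
  define k0 where "k0 = (LEAST k. y \<notin> Ui k q)"
  have k0: "y \<notin> Ui k0 q" unfolding k0_def using assms by (rule LeastI)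
  have "k0 \<noteq> 0" using k0 Ui_0 by (metis UNIV_I)
  then obtain j where j: "k0 = Suc j" by (cases k0) auto
  have "y \<in> Ui j q" using not_less_Least[of j "\<lambda>k. y \<notin> Ui k q"] j k0_def by auto
  then have "Ui j q \<noteq> Ui (Suc j) q" using k0 j by auto
  then have "E j \<noteq> E (Suc j)" using E_eq_Ui by blast
  then have "k0 \<le> card (UNIV :: ('c \<times> 'q) set)" using E_drop_bound j by metis
  then show ?thesis using k0 Ui_anti by blast
qed

lemma card_prod_UNIV: "card (UNIV :: ('c \<times> 'q) set) = card (UNIV :: 'q set) * card (UNIV :: 'c set)"
  using card_cartesian_product[of "UNIV::'c set" "UNIV::'q set"] by (simp add: mult.commute)

lemma claimB:
  assumes i: "i \<le> L" and ci: "card (UNIV :: 'q set) * card (UNIV :: 'c set) - 1 \<le> cnt i"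
    and pos1: "\<forall>j. i \<le> j \<and> j < L \<longrightarrow> 1 \<le> cnt j"
  shows "L < i + card (UNIV :: 'q set) * card (UNIV :: 'c set)"
proof (rule ccontr)
  let ?K = "card (UNIV :: 'q set) * card (UNIV :: 'c set)"
  assume "\<not> L < i + ?K"
  then have big: "i + ?K \<le> L" by simp
  let ?w0 = "drop i z"
  have "\<forall>t<length ?w0. 1 \<le> snd (snd (R (vec i, pos i, cnt i) (take t ?w0)))"
  proof (intro allI impI)
    fix t assume "t < length ?w0"
    then have "i + t \<le> L" "i + t < L" by auto
    then show "1 \<le> snd (snd (R (vec i, pos i, cnt i) (take t ?w0)))"
      using snd_run_cfg[of i t "vec i"] pos1 by simp
  qed
  from run_agree[OF this, of 0]
  have "fst (Ri (vec i, pos i, 0) ?w0) = vec L \<and> fst (snd (Ri (vec i, pos i, 0) ?w0)) = pos L"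
    using cfg_L'[OF i] by (simp add: cfg_eq)
  then have "vec i \<notin> Ui (Suc (length ?w0)) (pos i)" unfolding Ui_def using endL
    by (metis (no_types, lifting) lessI mem_Collect_eq)
  then have "vec i \<notin> Ui ?K (pos i)" using infwit card_prod_UNIV by metis
  then obtain w where w: "length w < ?K" "fst (snd (Ri (vec i, pos i, 0) w)) \<in> S" "fst (Ri (vec i, pos i, 0) w) \<notin> V"
    unfolding Ui_def by auto
  have "\<forall>t<length w. 1 \<le> snd (snd (R (vec i, pos i, cnt i) (take t w)))"
  proof (intro allI impI)
    fix t assume t: "t < length w"
    have "cnt i - t \<le> snd (snd (R (vec i, pos i, cnt i) (take t w)))"
      using run_cnt_lower[of d0 d1 "cnt i" t D "vec i" "pos i" w] e0 e1 by blast
    moreover have "1 \<le> cnt i - t" using t w(1) ci by linarith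
    ultimately show "1 \<le> snd (snd (R (vec i, pos i, cnt i) (take t w)))" by linarith
  qed
  from run_agree[OF this, of 0]
  have ag: "fst (R (vec i, pos i, cnt i) w) = fst (Ri (vec i, pos i, 0) w) \<and>
            fst (snd (R (vec i, pos i, cnt i) w)) = fst (snd (Ri (vec i, pos i, 0) w))" .
  have eq: "R c0 (take i z @ w) = R (vec i, pos i, cnt i) w"
    by (simp add: run_append cfg_eq[symmetric] cfg_def)
  have "length (take i z @ w) < L" using w(1) big i by simp
  from nowit[OF this] show False using eq ag w by simp
qed

end



context mw
begin

definition "uu s h = Max {t. t < s \<and> cnt t < h}"
definition "dd s j h = Min {t. s < t \<and> t \<le> j \<and> cnt t < h}"

lemma exc:
  assumes sj: "s \<le> j" "j < L" "cnt j < h" "cnt 0 < h" "h \<le> cnt s"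
  shows "uu s h < s" "cnt (uu s h) = h - 1" "s < dd s j h" "dd s j h \<le> j" "cnt (dd s j h) = h - 1"
    "\<And>t. uu s h < t \<Longrightarrow> t < dd s j h \<Longrightarrow> h \<le> cnt t"
proof -
  let ?A = "{t. t < s \<and> cnt t < h}"
  let ?B = "{t. s < t \<and> t \<le> j \<and> cnt t < h}"
  have s0: "0 < s" using sj by (cases s) auto
  have finA: "finite ?A" by (rule finite_subset[of _ "{..<s}"]) auto
  have A0: "0 \<in> ?A" using s0 sj by simp
  have uA: "uu s h \<in> ?A" unfolding uu_def using finA A0 by (intro Max_in) auto
  have uge: "\<And>t. t \<in> ?A \<Longrightarrow> t \<le> uu s h" unfolding uu_def using finA by (intro Max_ge) auto
  have sj2: "s < j" using sj by (cases "s = j") auto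
  have finB: "finite ?B" by (rule finite_subset[of _ "{..j}"]) auto
  have Bj: "j \<in> ?B" using sj2 sj by simp
  have dB: "dd s j h \<in> ?B" unfolding dd_def using finB Bj by (intro Min_in) auto
  have dle: "\<And>t. t \<in> ?B \<Longrightarrow> dd s j h \<le> t" unfolding dd_def using finB by (intro Min_le) auto
  show u1: "uu s h < s" using uA by simp
  show d1: "s < dd s j h" "dd s j h \<le> j" using dB by auto
  show mid: "\<And>t. uu s h < t \<Longrightarrow> t < dd s j h \<Longrightarrow> h \<le> cnt t"
  proof -
    fix t assume t: "uu s h < t" "t < dd s j h"
    show "h \<le> cnt t"
    proof (cases "t < s")
      case True
      show ?thesis
      proof (rule ccontr)
        assume "\<not> h \<le> cnt t"
        then have "t \<in> ?A" using True by simp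
        then show False using uge t by fastforce
      qed
    next
      case False
      show ?thesis
      proof (cases "t = s")
        case True then show ?thesis using sj by simp
      next
        case False
        then have "s < t" using \<open>\<not> t < s\<close> by simp
        show ?thesis
        proof (rule ccontr)
          assume "\<not> h \<le> cnt t"
          then have "t \<in> ?B" using \<open>s < t\<close> t d1 by simp
          then show False using dle t by fastforce
        qed
      qed
    qed
  qed
  have "h \<le> cnt (Suc (uu s h))"
  proof (cases "Suc (uu s h) = s")
    case True then show ?thesis using sj by simp
  next
    case False then show ?thesis using mid[of "Suc (uu s h)"] u1 d1 by simp
  qed
  moreover have "cnt (Suc (uu s h)) \<le> cnt (uu s h) + 1" using cnt_step(1)[of "uu s h"] u1 sj by simp
  moreover have "cnt (uu s h) < h" using uA by simp
  ultimately show "cnt (uu s h) = h - 1" by linarith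
  have "h \<le> cnt (dd s j h - 1)"
  proof (cases "dd s j h - 1 = s")
    case True then show ?thesis using sj by simp
  next
    case False then show ?thesis using mid[of "dd s j h - 1"] u1 d1 by simp
  qed
  moreover have "cnt (dd s j h - 1) \<le> cnt (Suc (dd s j h - 1)) + 1"
    using cnt_step(2)[of "dd s j h - 1"] d1 sj by simp
  moreover have "Suc (dd s j h - 1) = dd s j h" using d1 by simp
  ultimately have "h \<le> cnt (dd s j h) + 1" by simp
  moreover have "cnt (dd s j h) < h" using dB by simp
  ultimately show "cnt (dd s j h) = h - 1" by linarith
qed

lemma exc_mono:
  assumes sj: "s \<le> j" "j < L" "cnt j < h" "cnt 0 < h" "h < h'" "h' \<le> cnt s"
  shows "uu s h < uu s h'" "dd s j h' < dd s j h"
proof -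
  have sj': "cnt j < h'" "cnt 0 < h'" "h \<le> cnt s" using sj by linarith+
  note p = exc[OF sj(1,2,3,4) sj'(3)]
  note p' = exc[OF sj(1,2) sj'(1,2) sj(6)]
  have finA: "finite {t. t < s \<and> cnt t < h'}" by (rule finite_subset[of _ "{..<s}"]) auto
  have inA: "uu s h \<in> {t. t < s \<and> cnt t < h'}" using p(1,2) sj(5) by simp
  have "uu s h \<le> uu s h'" unfolding uu_def[of s h'] using finA inA by (rule Max_ge)
  moreover have "uu s h \<noteq> uu s h'"
  proof
    assume "uu s h = uu s h'" then have "h - 1 = h' - 1" using p(2) p'(2) by simp
    then show False using sj(4,5) by linarith
  qed
  ultimately show "uu s h < uu s h'" by simp
  have finB: "finite {t. s < t \<and> t \<le> j \<and> cnt t < h'}" by (rule finite_subset[of _ "{..j}"]) auto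
  have inB: "dd s j h \<in> {t. s < t \<and> t \<le> j \<and> cnt t < h'}" using p(3,4,5) sj(5) by simp
  have "dd s j h' \<le> dd s j h" unfolding dd_def[of s j h'] using finB inB by (rule Min_le)
  moreover have "dd s j h \<noteq> dd s j h'"
  proof
    assume "dd s j h = dd s j h'" then have "h - 1 = h' - 1" using p(5) p'(5) by simp
    then show False using sj(4,5) by linarith
  qed
  ultimately show "dd s j h' < dd s j h" by simp
qed

end



definition "mvm \<pi> X = (\<lambda>l. \<Sum>i\<in>UNIV. \<pi> i * X (i, l))"

lemma run_mvm: "fst (run d0 d1 D (y, q, m) w) = mvm y (\<lambda>(i, l). fst (run d0 d1 D (ebas i, q, m) w) l)"
proof (rule ext)
  fix l show "fst (run d0 d1 D (y, q, m) w) l = mvm y (\<lambda>(i, l). fst (run d0 d1 D (ebas i, q, m) w) l) l"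
    unfolding mvm_def using run_expand[of d0 d1 D y q m w l] by simp
qed

context mw
begin

lemma rho_sub:
  fixes \<pi> :: "'q \<Rightarrow> 'a"
  shows "fv.subspace {X. fst (R (mvm \<pi> X, \<beta>, m) w) \<in> V}"
proof (rule fv.subspaceI)
  have m0: "mvm \<pi> (0::'q \<times> 'q \<Rightarrow> 'a) = (\<lambda>_. 0)" by (simp add: mvm_def)
  have r0: "fst (R (\<lambda>_. 0, \<beta>, m) w) = (\<lambda>_. 0)" by (rule run_zero)
  have v0: "(\<lambda>_::'q. 0::'a) \<in> V" using fv.subspace_0[OF subV] by (simp add: zero_fun_def)
  show "0 \<in> {X. fst (R (mvm \<pi> X, \<beta>, m) w) \<in> V}"
    using v0 by (simp add: m0 r0)
next
  fix X Y assume X: "X \<in> {X. fst (R (mvm \<pi> X, \<beta>, m) w) \<in> V}" and Y: "Y \<in> {X. fst (R (mvm \<pi> X, \<beta>, m) w) \<in> V}"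
  have "mvm \<pi> (X + Y) = (\<lambda>l. mvm \<pi> X l + mvm \<pi> Y l)"
    by (simp add: mvm_def distrib_left sum.distrib)
  then have "fst (R (mvm \<pi> (X + Y), \<beta>, m) w) = fst (R (mvm \<pi> X, \<beta>, m) w) + fst (R (mvm \<pi> Y, \<beta>, m) w)"
    using run_add[of d0 d1 D "mvm \<pi> X" "mvm \<pi> Y" \<beta> m w] by (simp add: plus_fun_def)
  then show "X + Y \<in> {X. fst (R (mvm \<pi> X, \<beta>, m) w) \<in> V}"
    using X Y fv.subspace_add[OF subV] by simp
next
  fix c :: 'a and X assume X: "X \<in> {X. fst (R (mvm \<pi> X, \<beta>, m) w) \<in> V}"
  have "mvm \<pi> (\<lambda>i. c * X i) = (\<lambda>l. c * mvm \<pi> X l)"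
    by (simp add: mvm_def sum_distrib_left mult.left_commute)
  then have "fst (R (mvm \<pi> (\<lambda>i. c * X i), \<beta>, m) w) = (\<lambda>l. c * fst (R (mvm \<pi> X, \<beta>, m) w) l)"
    by (simp add: run_scale)
  then show "(\<lambda>i. c * X i) \<in> {X. fst (R (mvm \<pi> X, \<beta>, m) w) \<in> V}"
    using X fv.subspace_scale[OF subV] by simp
qed

definition "seg s j h = take (dd s j h - uu s h) (drop (uu s h) z)"
definition "XM s j \<alpha> h = (\<lambda>(i, l). fst (R (ebas i, \<alpha>, h - 1) (seg s j h)) l)"

definition "okl s j h \<longleftrightarrow> s \<le> j \<and> j < L \<and> cnt j = 0 \<and> max (cnt 0) 1 < h \<and> h \<le> cnt s"

lemma okl_exc:
  assumes "okl s j h"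
  shows "uu s h < s" "cnt (uu s h) = h - 1" "s < dd s j h" "dd s j h \<le> j" "cnt (dd s j h) = h - 1"
    "\<And>t. uu s h < t \<Longrightarrow> t < dd s j h \<Longrightarrow> h \<le> cnt t"
  using exc[of s j h] assms unfolding okl_def by auto

lemma seg_snd:
  assumes "okl s j h"
  shows "snd (R (y, pos (uu s h), cnt (uu s h)) (seg s j h)) = (pos (dd s j h), cnt (dd s j h))"
proof -
  note e = okl_exc[OF assms]
  have "uu s h + (dd s j h - uu s h) = dd s j h" using e by simp
  moreover have "dd s j h \<le> L" using e assms unfolding okl_def by simp
  ultimately show ?thesis unfolding seg_def using snd_run_cfg[of "uu s h" "dd s j h - uu s h" y] by simp
qed

lemma key_orig:
  assumes ok: "okl s j h"
  shows "fst (R (mvm (vec (uu s h)) (XM s j (pos (uu s h)) h), pos (dd s j h), h - 1) (drop (dd s j h) z)) = vec L"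
proof -
  note e = okl_exc[OF ok]
  let ?u = "uu s h" and ?d = "dd s j h"
  have dL: "?d \<le> L" using e ok unfolding okl_def by simp
  have "cfg ?d = R (cfg ?u) (seg s j h)"
    unfolding seg_def using cfg_add[of ?u "?d - ?u"] e dL by simp
  then have cd: "cfg ?d = R (vec ?u, pos ?u, h - 1) (seg s j h)" using e by (simp add: cfg_eq)
  from cd have "vec ?d = fst (R (vec ?u, pos ?u, h - 1) (seg s j h))" unfolding vec_def[of ?d] by simp
  also have "\<dots> = mvm (vec ?u) (XM s j (pos ?u) h)" unfolding XM_def by (rule run_mvm)
  finally have "vec ?d = mvm (vec ?u) (XM s j (pos ?u) h)" .
  then show ?thesis using cfg_L'[OF dL] e by (simp add: cfg_eq)
qed

lemma key_del:
  assumes ok: "okl s j h" and ok': "okl s j h'" and hh: "h < h'"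
    and a: "pos (uu s h') = \<alpha>" "pos (uu s h) = \<alpha>" and b: "pos (dd s j h) = \<beta>" "pos (dd s j h') = \<beta>"
  shows "fst (R (mvm (vec (uu s h)) (XM s j \<alpha> h'), \<beta>, h - 1) (drop (dd s j h) z)) \<in> V"
proof -
  note e = okl_exc[OF ok] and e' = okl_exc[OF ok']
  let ?u = "uu s h" and ?d = "dd s j h" and ?u' = "uu s h'" and ?d' = "dd s j h'"
  let ?\<pi> = "vec ?u"
  have h2: "2 \<le> h" using ok unfolding okl_def by simp
  have mono: "?u < ?u'" "?d' < ?d" using exc_mono[of s j h h'] ok ok' hh unfolding okl_def by auto
  have dL: "?d \<le> L" "?d' \<le> L" "?d < L" using e e' ok unfolding okl_def by auto
  define w' where "w' = take ?u z @ seg s j h' @ drop ?d z"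
  have hsum: "h - 1 + (h' - h) = h' - 1" using h2 hh by simp
  have hyp: "\<forall>t<length (seg s j h'). h' - h + 1 \<le> snd (snd (R (?\<pi>, \<alpha>, h - 1 + (h' - h)) (take t (seg s j h'))))"
  proof (intro allI impI)
    fix t assume t: "t < length (seg s j h')"
    then have tl: "t < ?d' - ?u'" unfolding seg_def by simp
    have tk: "take t (seg s j h') = take t (drop ?u' z)" unfolding seg_def using tl by simp
    have "snd (R (?\<pi>, pos ?u', cnt ?u') (take t (drop ?u' z))) = (pos (?u' + t), cnt (?u' + t))"
      using snd_run_cfg[of ?u' t ?\<pi>] tl dL by simp
    then have c: "snd (snd (R (?\<pi>, \<alpha>, h - 1 + (h' - h)) (take t (seg s j h')))) = cnt (?u' + t)"
      using a e' hsum tk by simp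
    show "h' - h + 1 \<le> snd (snd (R (?\<pi>, \<alpha>, h - 1 + (h' - h)) (take t (seg s j h'))))"
    proof (cases t)
      case 0 then show ?thesis using c e' h2 hh by simp
    next
      case (Suc t0)
      then have "h' \<le> cnt (?u' + t)" using e'(6)[of "?u' + t"] tl by simp
      then show ?thesis using c h2 hh by linarith
    qed
  qed
  have sh: "R (?\<pi>, \<alpha>, h - 1) (seg s j h') =
    (fst (R (?\<pi>, \<alpha>, h - 1 + (h' - h)) (seg s j h')), fst (snd (R (?\<pi>, \<alpha>, h - 1 + (h' - h)) (seg s j h'))),
     snd (snd (R (?\<pi>, \<alpha>, h - 1 + (h' - h)) (seg s j h'))) - (h' - h))"
    by (rule run_shift[OF e1 hyp])
  have "snd (R (?\<pi>, \<alpha>, h - 1 + (h' - h)) (seg s j h')) = (\<beta>, h' - 1)"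
    using seg_snd[OF ok', of ?\<pi>] a e' b hsum by simp
  moreover have "fst (R (?\<pi>, \<alpha>, h - 1 + (h' - h)) (seg s j h')) = mvm ?\<pi> (XM s j \<alpha> h')"
    unfolding XM_def using hsum by (simp add: run_mvm[of d0 d1 D ?\<pi>])
  ultimately have mid: "R (?\<pi>, \<alpha>, h - 1) (seg s j h') = (mvm ?\<pi> (XM s j \<alpha> h'), \<beta>, h - 1)"
    using sh h2 hh by simp
  have cu: "cfg ?u = (?\<pi>, \<alpha>, h - 1)" using a e by (simp add: cfg_eq)
  have run': "R c0 w' = R (mvm ?\<pi> (XM s j \<alpha> h'), \<beta>, h - 1) (drop ?d z)"
    unfolding w'_def using cu mid by (simp add: run_append cfg_def[symmetric])
  have "snd (R (mvm ?\<pi> (XM s j \<alpha> h'), \<beta>, h - 1) (drop ?d z)) = (pos L, cnt L)"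
    using snd_run_L[OF dL(1), of "mvm ?\<pi> (XM s j \<alpha> h')"] b e by simp
  then have st: "fst (snd (R c0 w')) \<in> S" using run' endL by simp
  have uL: "?u < L" "?u' < L" using e e' ok unfolding okl_def by auto
  have "length w' = ?u + (?d' - ?u') + (L - ?d)" unfolding w'_def seg_def using mono dL uL by simp
  then have "length w' < L" using mono dL e'(1,3) by linarith
  from nowit[OF this st] show ?thesis using run' by simp
qed

end



context mw
begin

lemma class_bound:
  assumes Hc: "\<And>h. h \<in> Hc \<Longrightarrow> okl s j h"
    and ab: "\<And>h. h \<in> Hc \<Longrightarrow> pos (uu s h) = \<alpha> \<and> pos (dd s j h) = \<beta>"
  shows "card Hc \<le> card (UNIV :: ('q \<times> 'q) set)"
proof -
  define Dsp where "Dsp t = fv.span (XM s j \<alpha> ` {h \<in> Hc. t \<le> h})" for t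
  have sub: "\<And>t. fv.subspace (Dsp t)" unfolding Dsp_def by simp
  have anti: "\<And>t. Dsp (Suc t) \<subseteq> Dsp t" unfolding Dsp_def by (rule fv.span_mono) auto
  have notin: "XM s j \<alpha> h \<notin> Dsp (Suc h)" if h: "h \<in> Hc" for h
  proof
    assume inD: "XM s j \<alpha> h \<in> Dsp (Suc h)"
    let ?P = "{X. fst (R (mvm (vec (uu s h)) X, \<beta>, h - 1) (drop (dd s j h) z)) \<in> V}"
    have "XM s j \<alpha> h \<in> ?P"
      using inD unfolding Dsp_def
    proof (induction rule: fv.span_induct)
      case base show ?case using rho_sub by simp
    next
      case (step X)
      then obtain h' where h': "h' \<in> Hc" "Suc h \<le> h'" "X = XM s j \<alpha> h'" by auto
      show ?case using key_del[OF Hc[OF h] Hc[OF h'(1)], of \<alpha> \<beta>] ab[OF h] ab[OF h'(1)] h' by simp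
    qed
    then show False using key_orig[OF Hc[OF h]] ab[OF h] endL by simp
  qed
  have fin: "finite Hc"
  proof (rule finite_subset)
    show "Hc \<subseteq> {..cnt s}" using Hc unfolding okl_def by auto
  qed simp
  have "Hc \<subseteq> {t \<in> {0..<Suc (cnt s)}. Dsp (Suc t) \<noteq> Dsp t}"
  proof
    fix t assume t: "t \<in> Hc"
    have "XM s j \<alpha> t \<in> Dsp t" unfolding Dsp_def using t by (intro fv.span_base) auto
    then have "Dsp (Suc t) \<noteq> Dsp t" using notin[OF t] by auto
    moreover have "t < Suc (cnt s)" using Hc[OF t] unfolding okl_def by simp
    ultimately show "t \<in> {t \<in> {0..<Suc (cnt s)}. Dsp (Suc t) \<noteq> Dsp t}" by simp
  qed
  then have "card Hc \<le> card {t \<in> {0..<Suc (cnt s)}. Dsp (Suc t) \<noteq> Dsp t}"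
    by (rule card_mono[rotated]) simp
  also have "card {t \<in> {0..<Suc (cnt s)}. Dsp (Suc t) \<noteq> Dsp t} + fv.dim (Dsp (Suc (cnt s))) \<le> fv.dim (Dsp 0)"
    by (rule chain_drops) (simp_all add: sub anti)
  then have "card {t \<in> {0..<Suc (cnt s)}. Dsp (Suc t) \<noteq> Dsp t} \<le> fv.dim (Dsp 0)" by simp
  also have "fv.dim (Dsp 0) \<le> card (UNIV :: ('q \<times> 'q) set)" by (rule fv_dim_le)
  finally show ?thesis .
qed

lemma claimC:
  assumes j: "j < L" "cnt j = 0" and ij: "i \<le> j"
  shows "cnt i \<le> max (cnt 0) 1 + (card (UNIV :: 'q set) * card (UNIV :: 'c set))^2"
proof -
  let ?B0 = "max (cnt 0) 1"
  let ?H = "{h. ?B0 < h \<and> h \<le> cnt i}"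
  let ?cl = "\<lambda>ab::'c \<times> 'c. {h \<in> ?H. pos (uu i h) = fst ab \<and> pos (dd i j h) = snd ab}"
  have ok: "\<And>h. h \<in> ?H \<Longrightarrow> okl i j h" unfolding okl_def using j ij by auto
  have "?H = (\<Union>ab\<in>UNIV. ?cl ab)" by auto
  then have "card ?H \<le> (\<Sum>ab\<in>UNIV. card (?cl ab))" by (simp add: card_UN_le)
  also have "\<dots> \<le> (\<Sum>ab\<in>(UNIV :: ('c \<times> 'c) set). card (UNIV :: ('q \<times> 'q) set))"
  proof (rule sum_mono)
    fix ab :: "'c \<times> 'c"
    show "card (?cl ab) \<le> card (UNIV :: ('q \<times> 'q) set)"
      by (rule class_bound[of _ i j "fst ab" "snd ab"]) (auto intro: ok)
  qed
  also have "\<dots> = (card (UNIV :: 'q set) * card (UNIV :: 'c set))^2"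
    using card_cartesian_product[of "UNIV::'c set" "UNIV::'c set"]
      card_cartesian_product[of "UNIV::'q set" "UNIV::'q set"]
    by (simp add: power2_eq_square algebra_simps)
  finally have cH: "card ?H \<le> (card (UNIV :: 'q set) * card (UNIV :: 'c set))^2" .
  have "?H = {?B0<..cnt i}" by auto
  then have "card ?H = cnt i - ?B0" by simp
  then show ?thesis using cH by linarith
qed

end



context mw
begin

lemma final_bound:
  "L \<le> (card (UNIV :: 'q set) * card (UNIV :: 'c set)) *
        (max (cnt 0) (card (UNIV :: 'q set) * card (UNIV :: 'c set)) + (card (UNIV :: 'q set) * card (UNIV :: 'c set))^2)"
proof -
  define K where "K = card (UNIV :: 'q set) * card (UNIV :: 'c set)"
  have K1: "1 \<le> K" unfolding K_def by (simp add: Suc_le_eq card_gt_0_iff)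
  define P where "P i \<longleftrightarrow> i \<le> L \<and> (i = L \<or> (K - 1 \<le> cnt i \<and> (\<forall>j. i \<le> j \<and> j < L \<longrightarrow> 1 \<le> cnt j)))" for i
  define i1 where "i1 = (LEAST i. P i)"
  have PL: "P L" unfolding P_def by simp
  have Pi1: "P i1" unfolding i1_def using PL by (rule LeastI)
  have i1L: "i1 \<le> L" using Pi1 unfolding P_def by simp
  have tail: "L < i1 + K"
  proof (cases "i1 = L")
    case True then show ?thesis using K1 by simp
  next
    case False
    then have "K - 1 \<le> cnt i1" "\<forall>j. i1 \<le> j \<and> j < L \<longrightarrow> 1 \<le> cnt j" using Pi1 unfolding P_def by auto
    then show ?thesis using claimB[OF i1L] unfolding K_def by blast
  qed
  define B where "B = max (cnt 0) 1 + K^2"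
  have low: "cnt i \<le> B" if i: "i < i1" for i
  proof (cases "\<exists>j. i \<le> j \<and> j < L \<and> cnt j = 0")
    case True
    then obtain j where "i \<le> j" "j < L" "cnt j = 0" by blast
    then show ?thesis using claimC[of j i] unfolding B_def K_def by simp
  next
    case False
    then have pos1: "\<forall>j. i \<le> j \<and> j < L \<longrightarrow> 1 \<le> cnt j" by (auto simp: Suc_le_eq)
    have "\<not> (K - 1 \<le> cnt i)"
    proof
      assume "K - 1 \<le> cnt i"
      then have "P i" unfolding P_def using pos1 i i1L by simp
      then have "i1 \<le> i" unfolding i1_def by (rule Least_le)
      then show False using i by simp
    qed
    moreover have "K \<le> K^2" by (simp add: power2_eq_square)
    ultimately show ?thesis unfolding B_def by linarith
  qed
  have "{..<i1} \<subseteq> (\<Union>m\<in>{..B}. {i. i < L \<and> cnt i = m})" using low i1L by auto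
  then have "card {..<i1} \<le> card (\<Union>m\<in>{..B}. {i. i < L \<and> cnt i = m})"
    by (rule card_mono[rotated]) simp
  also have "\<dots> \<le> (\<Sum>m\<in>{..B}. card {i. i < L \<and> cnt i = m})" by (rule card_UN_le) simp
  also have "\<dots> \<le> (\<Sum>m\<in>{..B}. K - 1)" by (rule sum_mono) (use claimA K_def in auto)
  also have "\<dots> = Suc B * (K - 1)" by simp
  finally have i1b: "i1 \<le> Suc B * (K - 1)" by simp
  define N where "N = max (cnt 0) K"
  obtain k where k: "K = Suc k" using K1 by (metis Suc_le_D One_nat_def)
  have BM: "B \<le> N + K^2" unfolding B_def N_def using K1 by auto
  have kM: "2 * k \<le> N + K^2" unfolding N_def using k by (auto simp: power2_eq_square)
  have "L \<le> Suc B * k + k" using tail i1b k by simp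
  also have "\<dots> = B * k + 2 * k" by simp
  also have "\<dots> \<le> (N + K^2) * k + (N + K^2)" using BM kM by (intro add_mono mult_le_mono1) auto
  also have "\<dots> = K * (N + K^2)" using k by (simp add: algebra_simps)
  finally show ?thesis unfolding K_def N_def .
qed

end


theorem mainTheorem14:
  fixes \<delta>0 \<delta>1 :: "'c::finite \<Rightarrow> 's::finite \<Rightarrow> 'c \<times> int"
    and p0 :: 'c
    and lamv \<eta> :: "('q::finite, 'a::field) fvec"
    and \<Delta> :: "'s \<Rightarrow> nat \<Rightarrow> ('q,'a) fmat"
    and x :: "('q,'a) fvec" and p :: 'c and n :: nat
    and V :: "('q,'a) fvec set" and S :: "'c set" and z :: "'s list"
  assumes "wodca \<delta>0 \<delta>1 p0 lamv \<Delta> \<eta>"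
    and "is_subspace V"
    and "minimal_witness \<delta>0 \<delta>1 \<Delta> (x, p, n) V S UNIV z"
  shows "length z \<le> (card (UNIV :: 'q set) * card (UNIV :: 'c set)) *
           (max n (card (UNIV :: 'q set) * card (UNIV :: 'c set)) + (card (UNIV :: 'q set) * card (UNIV :: 'c set))^2)"
proof -
  interpret mw \<delta>0 \<delta>1 \<Delta> "(x, p, n)" V S z
  proof
    show "\<And>q a. snd (\<delta>0 q a) \<in> {0, 1}" "\<And>q a. snd (\<delta>1 q a) \<in> {- 1, 0, 1}"
      using assms(1) unfolding wodca_def by auto
    show "fv.subspace V" using assms(2) by (rule is_subspace_fv)
    show "minimal_witness \<delta>0 \<delta>1 \<Delta> (x, p, n) V S UNIV z" by (rule assms(3))
  qed
  have "cnt 0 = n" by (simp add: cnt_def cfg_def)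
  then show ?thesis using final_bound by simp
qed

end
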